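(* For each $s\ge1$ there is a constant $C>0$ depending on $s$ such that for every $\zeta\in C_c^\infty(U)$ and every sufficiently regular function $w$ on $U$ for which the right-hand side is well defined, $$\int_UK(|\nabla w|)|\nabla w|^{2s+2}\zeta^2dx\le C\sup_{\operatorname{supp}\zeta}|w|^2\Big\{\int_UK(|\nabla w|)|\nabla w|^{2s-2}|\nabla^2w|^2\zeta^2dx+\int_UK(|\nabla w|)|\nabla w|^{2s}|\nabla\zeta|^2dx\Big\}.$$
   Context: $U\subset\mathbb R^n$ ($n\ge2$) is a bounded open set. Fix $N\ge1$, real exponents $0=\alpha_0<\dots<\alpha_N$, coefficients $a_0,a_N>0$, $a_1,\dots,a_{N-1}\ge0$, $g(s)=\sum_j a_js^{\alpha_j}$; for $\xi\ge0$ let $s(\xi)\ge0$ solve $s g(s)=\xi$ and $K(\xi)=1/g(s(\xi))$. $\nabla^2 w$ is the Hessian of $w$. $C$ also depends on $n,U,g$. *)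

theory Defs
  imports "HOL-Analysis.Analysis"
begin

definition pw :: "real \<Rightarrow> real \<Rightarrow> real" where
  "pw t e = (if e = 0 then 1 else t powr e)"

definition gfun :: "nat \<Rightarrow> (nat \<Rightarrow> real) \<Rightarrow> (nat \<Rightarrow> real) \<Rightarrow> real \<Rightarrow> real" where
  "gfun N a \<alpha> t = (\<Sum>j\<le>N. a j * pw t (\<alpha> j))"

definition sol :: "nat \<Rightarrow> (nat \<Rightarrow> real) \<Rightarrow> (nat \<Rightarrow> real) \<Rightarrow> real \<Rightarrow> real" where
  "sol N a \<alpha> \<xi> = (THE t. t \<ge> 0 \<and> t * gfun N a \<alpha> t = \<xi>)"

definition Kfun :: "nat \<Rightarrow> (nat \<Rightarrow> real) \<Rightarrow> (nat \<Rightarrow> real) \<Rightarrow> real \<Rightarrow> real" where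
  "Kfun N a \<alpha> \<xi> = 1 / gfun N a \<alpha> (sol N a \<alpha> \<xi>)"

definition grad :: "(real^'n \<Rightarrow> real) \<Rightarrow> real^'n \<Rightarrow> real^'n" where
  "grad f x = (\<chi> i. frechet_derivative f (at x) (axis i 1))"

definition hess :: "(real^'n \<Rightarrow> real) \<Rightarrow> real^'n \<Rightarrow> real^'n^'n" where
  "hess f x = (\<chi> i. grad (\<lambda>y. grad f y $ i) x)"

fun Ck_on :: "nat \<Rightarrow> (real^'n) set \<Rightarrow> (real^'n \<Rightarrow> real) \<Rightarrow> bool" where
  "Ck_on 0 U f = continuous_on U f"
| "Ck_on (Suc k) U f = (f differentiable_on U \<and> (\<forall>i. Ck_on k U (\<lambda>x. grad f x $ i)))"

definition supp :: "(real^'n \<Rightarrow> real) \<Rightarrow> (real^'n) set" where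
  "supp f = closure {x. f x \<noteq> 0}"

definition test_fun :: "(real^'n) set \<Rightarrow> (real^'n \<Rightarrow> real) \<Rightarrow> bool" where
  "test_fun U f = ((\<forall>k. Ck_on k UNIV f) \<and> compact (supp f) \<and> supp f \<subseteq> U)"

end

theory Submission
  imports Defs
begin


lemma cont_compact_support_integrable:
  fixes f :: "real^'n \<Rightarrow> real"
  assumes "continuous_on UNIV f" "compact S" "\<And>x. x \<notin> S \<Longrightarrow> f x = 0"
  shows "integrable lborel f"
proof -
  have "integrable lborel (\<lambda>x. indicator S x *\<^sub>R f x)"
    by (rule borel_integrable_compact) (use assms continuous_on_subset[OF assms(1)] in auto)
  moreover have "(\<lambda>x. indicator S x *\<^sub>R f x) = f"
    using assms(3) by (auto simp: indicator_def fun_eq_iff)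
  ultimately show ?thesis by simp
qed

lemma deriv_integral_zero:
  fixes f :: "real^'n \<Rightarrow> real" and D :: "real^'n \<Rightarrow> real^'n \<Rightarrow> real"
  assumes der: "\<And>x. (f has_derivative D x) (at x)" and S: "compact S"
    and zero: "\<And>x. x \<notin> S \<Longrightarrow> f x = 0" and bnd: "\<And>x. \<bar>D x e\<bar> \<le> B"
  shows "integrable lborel (\<lambda>x. D x e) \<and> integral\<^sup>L lborel (\<lambda>x. D x e) = 0"
proof -
  have contf: "continuous_on UNIV f"
    using der by (meson continuous_at_imp_continuous_on has_derivative_continuous)
  have intf: "integrable lborel f" by (rule cont_compact_support_integrable[OF contf S zero])
  obtain R where R: "\<And>x. x \<in> S \<Longrightarrow> norm x \<le> R"
    using compact_imp_bounded[OF S] unfolding bounded_iff by auto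
  define h :: "nat \<Rightarrow> real" where "h m = 1 / (Suc m)" for m
  have hpos: "h m > 0" for m by (simp add: h_def)
  have hle: "h m \<le> 1" for m by (simp add: h_def)
  define q where "q m x = (f (x + h m *\<^sub>R e) - f x) / h m" for m x
  define T where "T = cball (0::real^'n) (R + norm e)"
  have fmeas: "f \<in> borel_measurable borel" by (rule borel_measurable_continuous_onI[OF contf])
  have qmeas: "q m \<in> borel_measurable lborel" for m
    unfolding q_def by (intro borel_measurable_divide borel_measurable_diff borel_measurable_const
       measurable_compose[OF _ fmeas] borel_measurable_add) (auto simp: measurable_lborel1)
  have shift: "integral\<^sup>L lborel (\<lambda>x. f (x + c)) = integral\<^sup>L lborel f" for c
  proof -
    have "integral\<^sup>L lborel (\<lambda>x. f (c + x)) = integral\<^sup>L (distr lborel borel ((+) c)) f"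
      by (rule integral_distr[symmetric]) (auto intro: fmeas)
    also have "\<dots> = integral\<^sup>L lborel f" by (simp add: lborel_distr_plus)
    finally show ?thesis by (simp add: add.commute)
  qed
  have intshift: "integrable lborel (\<lambda>x. f (x + c))" for c
  proof -
    have "integrable (distr lborel borel ((+) c)) f" using intf by (simp add: lborel_distr_plus)
    then have "integrable lborel (\<lambda>x. f (c + x))"
      by (subst (asm) integrable_distr_eq) (auto intro: fmeas)
    then show ?thesis by (simp add: add.commute)
  qed
  have qint0: "integral\<^sup>L lborel (q m) = 0" for m
  proof -
    have "integral\<^sup>L lborel (q m) = (integral\<^sup>L lborel (\<lambda>x. f (x + h m *\<^sub>R e)) - integral\<^sup>L lborel f) / h m"
      unfolding q_def by (simp add: intshift intf)
    then show ?thesis using shift by simp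
  qed
  have lim: "(\<lambda>m. q m x) \<longlonglongrightarrow> D x e" for x
  proof -
    have lin: "linear (D x)" using der has_derivative_linear by blast
    have h1: "((\<lambda>t. x + t *\<^sub>R e) has_derivative (\<lambda>t. t *\<^sub>R e)) (at 0)"
      by (auto intro!: derivative_eq_intros)
    have h2: "(f has_derivative D x) (at (x + 0 *\<^sub>R e))" using der by simp
    have "((\<lambda>t. f (x + t *\<^sub>R e)) has_derivative (\<lambda>t. D x (t *\<^sub>R e))) (at 0)"
      using has_derivative_compose[OF h1 h2] by simp
    moreover have "(\<lambda>t. D x (t *\<^sub>R e)) = (*) (D x e)"
      using lin by (auto simp: fun_eq_iff linear_scale)
    ultimately have "((\<lambda>t. f (x + t *\<^sub>R e)) has_real_derivative D x e) (at 0)"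
      by (simp add: has_field_derivative_def)
    then have "((\<lambda>t. (f (x + t *\<^sub>R e) - f x) / t) \<longlongrightarrow> D x e) (at 0)"
      by (simp add: DERIV_def)
    moreover have "filterlim h (at 0) sequentially"
      unfolding h_def
      by (intro filterlim_atI) (auto intro!: LIMSEQ_Suc[OF lim_const_over_n] simp del: of_nat_Suc)
    ultimately show ?thesis unfolding q_def using filterlim_compose by blast
  qed
  have qbound: "norm (q m x) \<le> B * indicator T x" for m x
  proof -
    have mvt: "\<bar>f (x + h m *\<^sub>R e) - f x\<bar> \<le> B * h m"
    proof -
      have d: "((\<lambda>t. f (x + t *\<^sub>R e)) has_real_derivative D (x + t *\<^sub>R e) e) (at t)" for t
      proof -
        have lin: "linear (D (x + t *\<^sub>R e))" using der has_derivative_linear by blast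
        have h1: "((\<lambda>t. x + t *\<^sub>R e) has_derivative (\<lambda>t. t *\<^sub>R e)) (at t)"
          by (auto intro!: derivative_eq_intros)
        have "((\<lambda>t. f (x + t *\<^sub>R e)) has_derivative (\<lambda>u. D (x + t *\<^sub>R e) (u *\<^sub>R e))) (at t)"
          using has_derivative_compose[OF h1 der] by simp
        moreover have "(\<lambda>u. D (x + t *\<^sub>R e) (u *\<^sub>R e)) = (*) (D (x + t *\<^sub>R e) e)"
          using lin by (auto simp: fun_eq_iff linear_scale)
        ultimately show ?thesis by (simp add: has_field_derivative_def)
      qed
      obtain z where "0 < z" "z < h m"
        "f (x + h m *\<^sub>R e) - f (x + 0 *\<^sub>R e) = (h m - 0) * D (x + z *\<^sub>R e) e"
        using MVT2[of 0 "h m" "\<lambda>t. f (x + t *\<^sub>R e)" "\<lambda>t. D (x + t *\<^sub>R e) e"] hpos d by blast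
      then show ?thesis using bnd[of "x + z *\<^sub>R e"] hpos[of m]
        by (simp add: abs_mult mult.commute mult_left_mono)
    qed
    show ?thesis
    proof (cases "x \<in> T")
      case True
      then show ?thesis using mvt hpos[of m] by (simp add: q_def divide_le_eq abs_div)
    next
      case False
      have "x \<notin> S"
      proof
        assume "x \<in> S" then have "norm x \<le> R" by (rule R)
        then show False using False by (simp add: T_def) (smt (verit) norm_ge_zero)
      qed
      moreover have "x + h m *\<^sub>R e \<notin> S"
      proof
        assume "x + h m *\<^sub>R e \<in> S"
        then have "norm (x + h m *\<^sub>R e) \<le> R" using R by auto
        moreover have "norm (h m *\<^sub>R e) \<le> norm e" using hle[of m] hpos[of m]
          by (simp add: mult_left_le_one_le)
        ultimately have "norm x \<le> R + norm e" using norm_triangle_sub[of x "h m *\<^sub>R e"]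
          by (smt (verit) norm_triangle_ineq4 add_diff_cancel)
        then show False using False by (simp add: T_def)
      qed
      ultimately show ?thesis using False by (simp add: q_def zero)
    qed
  qed
  have wint: "integrable lborel (\<lambda>x. B * indicator T x)"
    by (intro integrable_mult_right integrable_real_indicator)
       (auto simp: T_def borel_compact intro!: emeasure_compact_finite[simplified])
  have Dmeas: "(\<lambda>x. D x e) \<in> borel_measurable lborel"
    by (rule borel_measurable_LIMSEQ_real[OF lim qmeas])
  have "integrable lborel (\<lambda>x. D x e)"
    by (rule integrable_dominated_convergence[where s=q, OF Dmeas qmeas wint]) (use lim qbound in auto)
  moreover have "(\<lambda>m. integral\<^sup>L lborel (q m)) \<longlonglongrightarrow> integral\<^sup>L lborel (\<lambda>x. D x e)"
    by (rule integral_dominated_convergence[where s=q, OF Dmeas qmeas wint]) (use lim qbound in auto)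
  ultimately show ?thesis using qint0 LIMSEQ_unique by (simp add: tendsto_const LIMSEQ_const_iff)
qed


locale gset =
  fixes N :: nat and a \<alpha> :: "nat \<Rightarrow> real"
  assumes al0: "\<alpha> 0 = 0" and almono: "\<forall>j<N. \<alpha> j < \<alpha> (Suc j)"
    and a0: "a 0 > 0" and anonneg: "\<forall>j\<le>N. a j \<ge> 0"
begin

abbreviation "g \<equiv> gfun N a \<alpha>"
definition hf :: "real \<Rightarrow> real" where "hf t = t * g t"
definition gd :: "real \<Rightarrow> real" where
  "gd t = (\<Sum>j\<le>N. a j * (if \<alpha> j = 0 then 0 else \<alpha> j * t powr (\<alpha> j - 1)))"

lemma al_nonneg: "j \<le> N \<Longrightarrow> \<alpha> j \<ge> 0"
proof (induction j)
  case 0 then show ?case by (simp add: al0)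
next
  case (Suc j) then show ?case using almono by (metis Suc_le_lessD less_imp_le_nat order.strict_trans1 order_less_imp_le)
qed

lemma pw_nonneg: "t \<ge> 0 \<Longrightarrow> pw t e \<ge> 0" by (simp add: pw_def)

lemma g_ge: assumes "t \<ge> 0" shows "g t \<ge> a 0"
proof -
  have "g t = a 0 * pw t (\<alpha> 0) + (\<Sum>j\<in>{1..N}. a j * pw t (\<alpha> j))"
    unfolding gfun_def by (simp add: atMost_atLeast0 sum.atLeast_Suc_atMost)
  moreover have "(\<Sum>j\<in>{1..N}. a j * pw t (\<alpha> j)) \<ge> 0"
    using anonneg assms by (intro sum_nonneg mult_nonneg_nonneg pw_nonneg) auto
  ultimately show ?thesis by (simp add: al0 pw_def)
qed

lemma g_pos: "t \<ge> 0 \<Longrightarrow> g t > 0" using g_ge a0 by (meson less_le_trans)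

lemma pw_mono: "0 \<le> t1 \<Longrightarrow> t1 \<le> t2 \<Longrightarrow> e \<ge> 0 \<Longrightarrow> pw t1 e \<le> pw t2 e"
  by (simp add: pw_def powr_mono2)

lemma g_mono: "0 \<le> t1 \<Longrightarrow> t1 \<le> t2 \<Longrightarrow> g t1 \<le> g t2"
  unfolding gfun_def using anonneg al_nonneg
  by (intro sum_mono mult_left_mono pw_mono) auto

lemma pw_cont: "continuous_on {0..} (\<lambda>t. pw t e)" if "e \<ge> 0"
proof (cases "e = 0")
  case False
  then have "e > 0" using that by simp
  have "continuous_on {0..} (\<lambda>t::real. t powr e)"
    by (rule continuous_on_powr') (use \<open>e > 0\<close> in \<open>auto intro!: continuous_intros\<close>)
  then show ?thesis unfolding pw_def using False by simp
qed (simp add: pw_def)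

lemma g_cont: "continuous_on {0..} g"
  unfolding gfun_def using al_nonneg
  by (intro continuous_intros continuous_on_mult_left pw_cont) auto

lemma g_deriv: assumes "t > 0" shows "(g has_real_derivative gd t) (at t)"
  unfolding gfun_def gd_def
proof (intro DERIV_sum DERIV_cmult)
  fix j show "((\<lambda>t. pw t (\<alpha> j)) has_real_derivative (if \<alpha> j = 0 then 0 else \<alpha> j * t powr (\<alpha> j - 1))) (at t)"
    unfolding pw_def using assms by (cases "\<alpha> j = 0") (auto intro!: has_real_derivative_powr)
qed

lemma gd_nonneg: "t > 0 \<Longrightarrow> gd t \<ge> 0"
  unfolding gd_def using anonneg al_nonneg by (intro sum_nonneg) auto

lemma hf_deriv: "t > 0 \<Longrightarrow> (hf has_real_derivative (g t + t * gd t)) (at t)"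
  unfolding hf_def using g_deriv by (auto intro!: derivative_eq_intros)

lemma hf_cont: "continuous_on {0..} hf"
  unfolding hf_def by (intro continuous_intros g_cont)

lemma hf_strict: "0 \<le> t1 \<Longrightarrow> t1 < t2 \<Longrightarrow> hf t1 < hf t2"
proof -
  assume h: "0 \<le> t1" "t1 < t2"
  have "t1 * g t1 \<le> t1 * g t2" using g_mono[of t1 t2] h by (intro mult_left_mono) auto
  also have "\<dots> < t2 * g t2" using g_pos[of t2] h by (intro mult_strict_right_mono) auto
  finally show ?thesis by (simp add: hf_def)
qed

lemma hf_inj: "0 \<le> t1 \<Longrightarrow> 0 \<le> t2 \<Longrightarrow> hf t1 = hf t2 \<Longrightarrow> t1 = t2"
  using hf_strict by (metis linorder_neqE_linordered_idom order_less_irrefl)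

lemma hf_ex: assumes "\<xi> \<ge> 0" shows "\<exists>t\<ge>0. hf t = \<xi>"
proof -
  have "hf 0 \<le> \<xi>" using assms by (simp add: hf_def)
  moreover have "\<xi> \<le> hf (\<xi> / a 0)"
  proof -
    have "g (\<xi> / a 0) \<ge> a 0" using g_ge assms a0 by simp
    then have "(\<xi> / a 0) * a 0 \<le> (\<xi> / a 0) * g (\<xi> / a 0)"
      using assms a0 by (intro mult_left_mono) auto
    then show ?thesis using a0 by (simp add: hf_def)
  qed
  moreover have "continuous_on {0..\<xi>/a 0} hf" using hf_cont by (rule continuous_on_subset) auto
  ultimately show ?thesis using IVT'[of hf 0 \<xi> "\<xi>/a 0"] assms a0 by auto
qed

lemma sol_prop: assumes "\<xi> \<ge> 0" shows "sol N a \<alpha> \<xi> \<ge> 0 \<and> hf (sol N a \<alpha> \<xi>) = \<xi>"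
proof -
  obtain t where t: "t \<ge> 0" "hf t = \<xi>" using hf_ex assms by blast
  have "sol N a \<alpha> \<xi> = t" unfolding sol_def
    by (rule the_equality) (use t hf_inj in \<open>auto simp: hf_def\<close>)
  then show ?thesis using t by simp
qed

lemma sol_hf: "t \<ge> 0 \<Longrightarrow> sol N a \<alpha> (hf t) = t"
  using sol_prop[of "hf t"] hf_inj by (metis hf_def mult_nonneg_nonneg g_pos less_imp_le)

abbreviation "sl \<equiv> sol N a \<alpha>"
abbreviation "K \<equiv> Kfun N a \<alpha>"

lemma K_pos: "\<xi> \<ge> 0 \<Longrightarrow> K \<xi> > 0"
  unfolding Kfun_def using sol_prop g_pos by auto

lemma K_le: "\<xi> \<ge> 0 \<Longrightarrow> K \<xi> \<le> 1 / a 0"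
  unfolding Kfun_def using sol_prop g_ge a0 by (simp add: frac_le)

lemma sol_eq: "\<xi> \<ge> 0 \<Longrightarrow> sl \<xi> = \<xi> * K \<xi>"
  unfolding Kfun_def using sol_prop[of \<xi>] g_pos[of "sl \<xi>"]
  by (auto simp: hf_def field_simps)

lemma sol_le: "\<xi> \<ge> 0 \<Longrightarrow> sl \<xi> \<le> \<xi> / a 0"
  using sol_eq K_le by (simp add: mult_left_mono divide_inverse) 

lemma sol_pos: "\<xi> > 0 \<Longrightarrow> sl \<xi> > 0"
  using sol_eq K_pos by simp

lemma hf_isCont: "z > 0 \<Longrightarrow> isCont hf z"
  using hf_deriv DERIV_isCont by blast

lemma sol_isCont: assumes "\<xi> > 0" shows "isCont sl \<xi>"
proof -
  define t where "t = sl \<xi>"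
  have t: "t > 0" "hf t = \<xi>" using sol_pos sol_prop assms t_def by auto
  have "isCont sl (hf t)"
  proof (rule isCont_inverse_function[where f=hf and g=sl and x=t and d="t/2"])
    fix z assume "\<bar>z - t\<bar> \<le> t / 2"
    then have "t - z \<le> t / 2" by (metis abs_le_D2 minus_diff_eq)
    then have "z > 0" using t(1) by linarith
    then show "sl (hf z) = z" "isCont hf z" using sol_hf hf_isCont by auto
  qed (use t in auto)
  then show ?thesis using t by simp
qed

lemma sol_cont: "continuous_on {0..} sl"
proof (clarsimp simp: continuous_on_eq_continuous_within)
  fix x :: real assume x: "0 \<le> x"
  show "continuous (at x within {0..}) sl"
  proof (cases "x = 0")
    case False then have "isCont sl x" using x sol_isCont by auto
    then show ?thesis by (simp add: continuous_at_imp_continuous_at_within)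
  next
    case True
    have s0: "sl 0 = 0" using sol_le[of 0] sol_prop[of 0] by simp
    have "(sl \<longlongrightarrow> 0) (at 0 within {0..})"
    proof (rule tendsto_sandwich[of "\<lambda>_. 0" _ _ "\<lambda>y. y / a 0"])
      show "\<forall>\<^sub>F y in at 0 within {0..}. 0 \<le> sl y"
        by (auto simp: eventually_at_filter sol_prop)
      show "\<forall>\<^sub>F y in at 0 within {0..}. sl y \<le> y / a 0"
        by (auto simp: eventually_at_filter sol_le)
      show "((\<lambda>y. y / a 0) \<longlongrightarrow> 0) (at 0 within {0..})"
        using a0 by (auto intro!: tendsto_eq_intros)
    qed auto
    then show ?thesis using True s0 by (simp add: continuous_within)
  qed
qed

lemma K_cont: "continuous_on {0..} K"
proof -
  have "continuous_on {0..} (\<lambda>\<xi>. 1 / g (sl \<xi>))"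
    by (intro continuous_intros continuous_on_compose2[OF g_cont sol_cont])
       (use sol_prop g_pos in \<open>auto simp: less_imp_neq[symmetric]\<close>)
  then show ?thesis unfolding Kfun_def .
qed

lemma sol_deriv: assumes "\<xi> > 0"
  shows "\<exists>d. (sl has_real_derivative d) (at \<xi>) \<and> 0 \<le> d \<and> d \<le> K \<xi>"
proof -
  define t where "t = sl \<xi>"
  have t: "t > 0" "hf t = \<xi>" using sol_pos sol_prop assms t_def by auto
  define D where "D = g t + t * gd t"
  have D: "D \<ge> g t" "g t > 0" using gd_nonneg[of t] t g_pos[of t] by (auto simp: D_def)
  have "(sl has_real_derivative inverse D) (at \<xi>)"
  proof (rule DERIV_inverse_function[where a=0 and b="\<xi>+1"])
    show "(hf has_real_derivative D) (at (sl \<xi>))" using hf_deriv t by (simp add: D_def t_def)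
  qed (use D assms sol_prop sol_isCont in auto)
  moreover have "inverse D \<le> K \<xi>" unfolding Kfun_def using D
    by (simp add: t_def[symmetric] inverse_eq_divide frac_le)
  ultimately show ?thesis using D by (intro exI[of _ "inverse D"]) auto
qed

end


locale gs = gset + fixes s :: real assumes s1: "s \<ge> 1"
begin

definition rho :: "real \<Rightarrow> real" where "rho r = sl r * r powr (2 * s - 1)"

lemma rho_deriv_ex: assumes "r > 0"
  shows "\<exists>d. (rho has_real_derivative d) (at r) \<and> 0 \<le> d \<and> d \<le> 2 * s * K r * r powr (2 * s - 1)"
proof -
  obtain d1 where d1: "(sl has_real_derivative d1) (at r)" "0 \<le> d1" "d1 \<le> K r"
    using sol_deriv assms by blast
  have "(rho has_real_derivative (d1 * r powr (2 * s-1) + sl r * ((2 * s-1) * r powr (2 * s-1-1)))) (at r)"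
    unfolding rho_def using d1 assms by (auto intro!: derivative_eq_intros has_real_derivative_powr)
  moreover have e: "sl r * ((2 * s-1) * r powr (2 * s-1-1)) = (2 * s-1) * K r * r powr (2 * s-1)"
  proof -
    have q: "r * r powr (2 * s-1-1) = r powr (2 * s-1)"
      using assms by (simp add: powr_mult_base)
    have "sl r * ((2 * s-1) * r powr (2 * s-1-1)) = (2 * s-1) * K r * (r * r powr (2 * s-1-1))"
    proof -
      have sr: "sl r = r * K r" using sol_eq[of r] assms by simp
      show ?thesis unfolding sr by algebra
    qed
    then show ?thesis by (simp only: q)
  qed
  moreover have "d1 * r powr (2 * s-1) \<le> K r * r powr (2 * s-1)"
    using d1 by (intro mult_right_mono) auto
  moreover have "0 \<le> (2 * s-1) * K r * r powr (2 * s-1)"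
    using s1 K_pos[of r] assms by simp
  moreover have "0 \<le> d1 * r powr (2 * s-1)" using d1 by simp
  moreover have "K r * r powr (2 * s-1) + (2 * s-1) * K r * r powr (2 * s-1) = 2 * s * K r * r powr (2 * s - 1)"
    by algebra
  ultimately show ?thesis
    by (intro exI[of _ "d1 * r powr (2 * s-1) + sl r * ((2 * s-1) * r powr (2 * s-1-1))"]) linarith
qed

definition rhod :: "real \<Rightarrow> real" where
  "rhod r = (SOME d. (rho has_real_derivative d) (at r) \<and> 0 \<le> d \<and> d \<le> 2 * s * K r * r powr (2 * s - 1))"

lemma rhod: "r > 0 \<Longrightarrow> (rho has_real_derivative rhod r) (at r) \<and> 0 \<le> rhod r \<and> rhod r \<le> 2 * s * K r * r powr (2 * s - 1)"
  unfolding rhod_def using rho_deriv_ex by (rule someI_ex)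

lemma rho_bound: "r \<ge> 0 \<Longrightarrow> \<bar>rho r\<bar> \<le> r powr (2 * s) / a 0"
proof -
  assume r: "r \<ge> 0"
  have "\<bar>rho r\<bar> = sl r * r powr (2 * s-1)" unfolding rho_def using sol_prop r by simp
  also have "\<dots> \<le> (r / a 0) * r powr (2 * s-1)" using sol_le r by (intro mult_right_mono) auto
  also have "\<dots> = r powr (2 * s) / a 0"
  proof (cases "r = 0")
    case False
    then have "r * r powr (2 * s-1) = r powr (2 * s)" using r by (simp add: powr_mult_base)
    then show ?thesis by simp
  qed simp
  finally show ?thesis .
qed

lemma rho_sq: assumes r: "r \<ge> 0" shows "rho r * r\<^sup>2 = K r * pw r (2 * s+2)"
proof (cases "r = 0")
  case False
  then have r0: "r > 0" using r by simp
  have sr: "sl r = r * K r" using sol_eq[of r] r by simp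
  have "rho r * r\<^sup>2 = K r * (r * (r * (r * r powr (2 * s-1))))"
    unfolding rho_def sr power2_eq_square by algebra
  also have "r * (r * (r * r powr (2 * s-1))) = r powr (2 * s+2)"
    using r0 by (simp add: powr_mult_base algebra_simps)
  finally show ?thesis using s1 by (simp add: pw_def)
qed (use s1 in \<open>simp add: pw_def rho_def\<close>)

lemma rho_eq: assumes r: "r \<ge> 0" shows "rho r = K r * pw r (2 * s)"
proof (cases "r = 0")
  case False
  then have r0: "r > 0" using r by simp
  have sr: "sl r = r * K r" using sol_eq[of r] r by simp
  have "rho r = K r * (r * r powr (2 * s-1))"
    unfolding rho_def sr by algebra
  also have "r * r powr (2 * s-1) = r powr (2 * s)" using r0 by (simp add: powr_mult_base)
  finally show ?thesis using s1 by (simp add: pw_def)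
qed (use s1 in \<open>simp add: pw_def rho_def\<close>)

lemma rho_nonneg: "r \<ge> 0 \<Longrightarrow> rho r \<ge> 0"
  unfolding rho_def using sol_prop by simp

end


context gs begin

definition rt :: "real^'n \<Rightarrow> real" where "rt p = rho (norm p)"
definition Drt :: "real^'n \<Rightarrow> real^'n \<Rightarrow> real" where
  "Drt p v = (if p = 0 then 0 else rhod (norm p) * inner p v / norm p)"

lemma rho0: "rho 0 = 0" by (simp add: rho_def)

lemma rt_deriv: "(rt has_derivative Drt p) (at p)"
proof (cases "p = 0")
  case False
  have n: "(norm has_derivative (\<lambda>h. inner h (sgn p))) (at p)"
    using has_derivative_norm[OF False] .
  have r: "(rho has_derivative (*) (rhod (norm p))) (at (norm p))"
    using rhod[of "norm p"] False by (simp add: has_field_derivative_def)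
  have "((\<lambda>x. rho (norm x)) has_derivative (\<lambda>h. rhod (norm p) * inner h (sgn p))) (at p)"
    using has_derivative_compose[OF n r] .
  moreover have "(\<lambda>h. rhod (norm p) * inner h (sgn p)) = Drt p"
    using False by (auto simp: fun_eq_iff Drt_def sgn_div_norm inner_commute divide_inverse)
  ultimately show ?thesis by (simp add: rt_def[abs_def])
next
  case True
  have "((\<lambda>y. norm (rt y - rt 0 - 0) / norm (y - 0)) \<longlongrightarrow> 0) (at (0::real^'n))"
  proof (rule tendsto_sandwich[of "\<lambda>_. 0" _ _ "\<lambda>y. norm y / a 0"])
    show "\<forall>\<^sub>F y in at (0::real^'n). 0 \<le> norm (rt y - rt 0 - 0) / norm (y - 0)" by simp
    have bnd: "norm (rt y - rt 0 - 0) / norm (y - 0) \<le> norm y / a 0" if y: "norm y < 1" "y \<noteq> 0" for y :: "real^'n"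
    proof -
      have "\<bar>rt y\<bar> \<le> norm y powr (2 * s) / a 0" unfolding rt_def using rho_bound by simp
      also have "\<dots> \<le> norm y powr 2 / a 0"
        using y s1 a0 by (intro divide_right_mono powr_mono') auto
      also have "\<dots> = norm y * norm y / a 0" by (simp add: power2_eq_square)
      finally show ?thesis using y by (simp add: rt_def rho0 divide_le_eq field_simps)
    qed
    show "\<forall>\<^sub>F y in at (0::real^'n). norm (rt y - rt 0 - 0) / norm (y - 0) \<le> norm y / a 0"
      unfolding eventually_at
    proof (intro exI[of _ 1] conjI ballI impI)
      fix y :: "real^'n" assume "y \<in> UNIV" "y \<noteq> 0 \<and> dist y 0 < 1"
      then show "norm (rt y - rt 0 - 0) / norm (y - 0) \<le> norm y / a 0"
        using bnd[of y] by (simp add: dist_norm)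
    qed simp
    show "((\<lambda>y. norm y / a 0) \<longlongrightarrow> 0) (at (0::real^'n))"
      using a0 by (auto intro!: tendsto_eq_intros)
  qed auto
  then have "(rt has_derivative (\<lambda>_. 0)) (at 0)"
    by (simp add: has_derivative_iff_norm)
  moreover have "Drt p = (\<lambda>_. 0)" using True by (simp add: fun_eq_iff Drt_def)
  ultimately show ?thesis using True by simp
qed

lemma Drt_bound: "\<bar>Drt p v\<bar> \<le> 2 * s * K (norm p) * norm p powr (2 * s - 1) * norm v"
proof (cases "p = 0")
  case False
  have r: "0 \<le> rhod (norm p)" "rhod (norm p) \<le> 2 * s * K (norm p) * norm p powr (2 * s - 1)"
    using rhod[of "norm p"] False by auto
  have "\<bar>Drt p v\<bar> = rhod (norm p) * (\<bar>inner p v\<bar> / norm p)"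
    using False r by (simp add: Drt_def abs_mult)
  also have "\<dots> \<le> rhod (norm p) * norm v"
    using False r Cauchy_Schwarz_ineq2[of p v]
    by (intro mult_left_mono) (auto simp: divide_le_eq mult.commute)
  also have "\<dots> \<le> 2 * s * K (norm p) * norm p powr (2 * s - 1) * norm v"
    using r by (intro mult_right_mono) auto
  finally show ?thesis .
next
  case True
  then show ?thesis using s1 K_pos[of 0] by (simp add: Drt_def)
qed

lemma rt_cont: "continuous_on UNIV rt"
  using rt_deriv by (meson continuous_at_imp_continuous_on has_derivative_continuous)

lemma rt_nonneg: "rt p \<ge> 0" unfolding rt_def using rho_nonneg by simp

end


lemma grad_deriv:
  fixes f :: "real^'n \<Rightarrow> real"
  assumes "f differentiable (at x)"
  shows "(f has_derivative frechet_derivative f (at x)) (at x)"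
  using assms frechet_derivative_works by blast

lemma grad_axis: "frechet_derivative f (at x) (axis i 1) = grad f x $ i"
  by (simp add: grad_def)

lemma vec_has_derivative:
  fixes F :: "real^'m \<Rightarrow> real^'n" and F' :: "real^'m \<Rightarrow> real^'n"
  assumes "\<And>i. ((\<lambda>x. F x $ i) has_derivative (\<lambda>h. F' h $ i)) (at x)"
  shows "(F has_derivative F') (at x)"
proof (rule has_derivative_componentwise_within[THEN iffD2], rule ballI)
  fix b :: "real^'n" assume "b \<in> Basis"
  then obtain i u where "u \<in> (Basis::real set)" "b = axis i u" unfolding Basis_vec_def by blast
  then have b: "b = axis i 1" by simp
  have e1: "(\<lambda>x. F x \<bullet> b) = (\<lambda>x. F x $ i)" by (simp add: b inner_axis)
  have e2: "(\<lambda>x. F' x \<bullet> b) = (\<lambda>x. F' x $ i)" by (simp add: b inner_axis)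
  show "((\<lambda>x. F x \<bullet> b) has_derivative (\<lambda>x. F' x \<bullet> b)) (at x)"
    unfolding e1 e2 by (rule assms)
qed

lemma zero_near_grad:
  fixes f :: "real^'n \<Rightarrow> real"
  assumes "open V" "x \<in> V" "\<And>y. y \<in> V \<Longrightarrow> f y = 0"
  shows "(f has_derivative (\<lambda>_. 0)) (at x)" "grad f x = 0"
proof -
  show d: "(f has_derivative (\<lambda>_. 0)) (at x)"
    by (rule has_derivative_transform_within_open[of "\<lambda>_. 0" _ _ _ V]) (use assms in auto)
  have "frechet_derivative f (at x) = (\<lambda>_. 0)" using frechet_derivative_at[OF d] by simp
  then show "grad f x = 0" by (simp add: grad_def vec_eq_iff)
qed

lemma compact_bound:
  fixes f :: "real^'n \<Rightarrow> 'b::real_normed_vector"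
  assumes "compact S" "continuous_on S f"
  shows "\<exists>M\<ge>0. \<forall>x\<in>S. norm (f x) \<le> M"
proof -
  have "bounded (f ` S)" using compact_imp_bounded compact_continuous_image assms by blast
  then obtain M where "\<forall>y\<in>f ` S. norm y \<le> M" unfolding bounded_iff by blast
  then show ?thesis by (intro exI[of _ "max M 0"]) auto
qed

lemma masked_integrable:
  fixes f :: "real^'n \<Rightarrow> real"
  assumes "open U" "compact S" "S \<subseteq> U" "continuous_on U f" "\<And>x. x \<in> U \<Longrightarrow> x \<notin> S \<Longrightarrow> f x = 0"
  shows "integrable lborel (\<lambda>x. indicator U x * f x)"
    "(\<lambda>x. indicator U x * f x) \<in> borel_measurable borel"
proof -
  have "integrable lborel (\<lambda>x. indicator S x *\<^sub>R f x)"
    by (rule borel_integrable_compact) (use assms continuous_on_subset[OF assms(4) assms(3)] in auto)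
  moreover have "(\<lambda>x. indicator S x *\<^sub>R f x) = (\<lambda>x. indicator U x * f x)"
    using assms by (auto simp: indicator_def fun_eq_iff)
  ultimately show "integrable lborel (\<lambda>x. indicator U x * f x)" by simp
  show "(\<lambda>x. indicator U x * f x) \<in> borel_measurable borel"
    using borel_measurable_continuous_on_indicator[of U f] assms by (simp add: borel_open)
qed

lemma set_lint_lborel:
  fixes f :: "real^'n \<Rightarrow> real"
  assumes "(\<lambda>x. indicator U x * f x) \<in> borel_measurable borel"
  shows "(LINT x:U|lebesgue. f x) = integral\<^sup>L lborel (\<lambda>x. indicator U x * f x)"
proof -
  have "(LINT x:U|lebesgue. f x) = integral\<^sup>L lebesgue (\<lambda>x. indicator U x * f x)"
    by (simp add: set_lebesgue_integral_def)
  also have "\<dots> = integral\<^sup>L lborel (\<lambda>x. indicator U x * f x)"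
    by (rule integral_completion) (use assms in simp)
  finally show ?thesis .
qed

lemma young1:
  fixes M z k t r G :: real
  assumes "k \<ge> 0" "M \<ge> 0"
  shows "2 * M * \<bar>z\<bar> * (k * t\<^sup>2 * r\<^sup>2) * r * G \<le> (k * t\<^sup>2 * r\<^sup>2 * r\<^sup>2) * z\<^sup>2 / 4 + 4 * M\<^sup>2 * (k * t\<^sup>2 * r\<^sup>2) * G\<^sup>2"
proof -
  have "0 \<le> k * t\<^sup>2 * r\<^sup>2 * (r * \<bar>z\<bar> / 2 - 2 * M * G)\<^sup>2" using assms by simp
  moreover have "z\<^sup>2 = \<bar>z\<bar>\<^sup>2" by simp
  moreover have "\<And>y. (k * t\<^sup>2 * r\<^sup>2 * r\<^sup>2) * y\<^sup>2 / 4 + 4 * M\<^sup>2 * (k * t\<^sup>2 * r\<^sup>2) * G\<^sup>2 - 2 * M * y * (k * t\<^sup>2 * r\<^sup>2) * r * G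
     = k * t\<^sup>2 * r\<^sup>2 * (r * y / 2 - 2 * M * G)\<^sup>2"
    by (simp add: power2_eq_square field_simps)
  ultimately show ?thesis by (smt (verit))
qed

lemma young2:
  fixes M z k t r h c :: real
  assumes "k \<ge> 0" "M \<ge> 0"
  shows "M * z\<^sup>2 * c * (k * t\<^sup>2 * r\<^sup>2) * h \<le> (k * t\<^sup>2 * r\<^sup>2 * r\<^sup>2) * z\<^sup>2 / 4 + M\<^sup>2 * c\<^sup>2 * (k * t\<^sup>2) * h\<^sup>2 * z\<^sup>2"
proof -
  have "0 \<le> k * t\<^sup>2 * z\<^sup>2 * (r\<^sup>2 / 2 - M * c * h)\<^sup>2" using assms by simp
  moreover have "(k * t\<^sup>2 * r\<^sup>2 * r\<^sup>2) * z\<^sup>2 / 4 + M\<^sup>2 * c\<^sup>2 * (k * t\<^sup>2) * h\<^sup>2 * z\<^sup>2 - M * z\<^sup>2 * c * (k * t\<^sup>2 * r\<^sup>2) * h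
     = k * t\<^sup>2 * z\<^sup>2 * (r\<^sup>2 / 2 - M * c * h)\<^sup>2"
    by (simp add: power2_eq_square field_simps)
  ultimately show ?thesis by linarith
qed


locale mset = gs +
  fixes U :: "(real^'n) set" and \<zeta> w :: "real^'n \<Rightarrow> real"
  assumes Uopen: "open U" and tf: "test_fun U \<zeta>" and wC2: "Ck_on 2 U w"
begin

abbreviation "S \<equiv> supp \<zeta>"
abbreviation "p x \<equiv> grad w x"
abbreviation "H x \<equiv> hess w x"
abbreviation "gz x \<equiv> grad \<zeta> x"
definition "th x = rt (p x)"
definition "col x i = (\<chi> k. H x $ k $ i)"

lemma S_compact: "compact S" and S_sub: "S \<subseteq> U"
  using tf[unfolded test_fun_def] by (rule conjunct2[THEN conjunct1], rule conjunct2[THEN conjunct2])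

lemma zeta_C1: "Ck_on 1 UNIV \<zeta>"
proof -
  have "\<forall>k. Ck_on k UNIV \<zeta>" using tf[unfolded test_fun_def] by (rule conjunct1)
  then show ?thesis by (rule spec)
qed

lemma zeta_zero: assumes "x \<notin> S" shows "\<zeta> x = 0"
proof (rule ccontr)
  assume "\<zeta> x \<noteq> 0"
  then have "x \<in> {x. \<zeta> x \<noteq> 0}" by simp
  then have "x \<in> S" unfolding supp_def using closure_subset by (rule subsetD[rotated])
  then show False using assms by simp
qed

lemma zeta_diff: "\<zeta> differentiable (at x)"
proof -
  have "Ck_on 1 UNIV \<zeta>" by (rule zeta_C1)
  then show ?thesis by (simp add: differentiable_on_eq_differentiable_at)
qed

lemma gz_cont: "continuous_on UNIV (\<lambda>x. gz x $ i)"
proof -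
  have "Ck_on 1 UNIV \<zeta>" by (rule zeta_C1)
  then show ?thesis by simp
qed

lemma zeta_cont: "continuous_on UNIV \<zeta>"
  using zeta_diff by (meson continuous_at_imp_continuous_on differentiable_imp_continuous_within)

lemma gz_zero: "x \<notin> S \<Longrightarrow> gz x = 0"
  by (rule zero_near_grad(2)[of "- S"]) (use S_compact compact_imp_closed zeta_zero in auto)

lemma w_diff: "x \<in> U \<Longrightarrow> w differentiable (at x)"
  using wC2 Uopen by (simp add: numeral_2_eq_2 differentiable_on_eq_differentiable_at)

lemma p_diff: "x \<in> U \<Longrightarrow> (\<lambda>y. p y $ k) differentiable (at x)"
  using wC2 Uopen by (simp add: numeral_2_eq_2 differentiable_on_eq_differentiable_at)

lemma H_cont: "continuous_on U (\<lambda>x. H x $ k $ j)"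
  using wC2 by (simp add: numeral_2_eq_2 hess_def)

lemma w_cont: "continuous_on U w"
  using wC2 by (simp add: numeral_2_eq_2 differentiable_imp_continuous_on)

lemma p_cont: "continuous_on U p"
proof -
  have "continuous_on U (\<lambda>x. p x $ k)" for k
    using wC2 by (simp add: numeral_2_eq_2 differentiable_imp_continuous_on)
  then have "continuous_on U (\<lambda>x. \<chi> k. p x $ k)" by (intro continuous_on_vec_lambda)
  then show ?thesis by simp
qed

lemma Hv_cont: "continuous_on U H"
proof -
  have "continuous_on U (\<lambda>x. \<chi> k. \<chi> j. H x $ k $ j)"
    by (intro continuous_on_vec_lambda H_cont)
  then show ?thesis by simp
qed

lemma gzv_cont: "continuous_on UNIV gz"
proof -
  have "continuous_on UNIV (\<lambda>x. \<chi> k. gz x $ k)" by (intro continuous_on_vec_lambda gz_cont)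
  then show ?thesis by simp
qed

lemma th_deriv: assumes "x \<in> U"
  shows "(th has_derivative (\<lambda>v. Drt (p x) (\<chi> k. frechet_derivative (\<lambda>y. p y $ k) (at x) v))) (at x)"
proof -
  have "(p has_derivative (\<lambda>v. \<chi> k. frechet_derivative (\<lambda>y. p y $ k) (at x) v)) (at x)"
    by (rule vec_has_derivative) (use grad_deriv[OF p_diff[OF assms]] in simp)
  from has_derivative_compose[OF this rt_deriv] show ?thesis
    unfolding th_def[abs_def] .
qed

lemma th_axis: "x \<in> U \<Longrightarrow> (\<chi> k. frechet_derivative (\<lambda>y. p y $ k) (at x) (axis i 1)) = col x i"
  by (simp add: col_def grad_axis hess_def)

definition "Fi i x = (if x \<in> U then w x * (\<zeta> x * \<zeta> x) * th x * p x $ i else 0)"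
definition "Ei i x = (if x \<in> U then p x $ i * (\<zeta> x * \<zeta> x) * th x * p x $ i
   + w x * (2 * \<zeta> x * gz x $ i) * th x * p x $ i + w x * (\<zeta> x * \<zeta> x) * Drt (p x) (col x i) * p x $ i
   + w x * (\<zeta> x * \<zeta> x) * th x * H x $ i $ i else 0)"

lemma Fi_zero: "x \<notin> S \<Longrightarrow> Fi i x = 0"
  by (simp add: Fi_def zeta_zero)

lemma Ei_zero: "x \<notin> S \<Longrightarrow> Ei i x = 0"
  by (simp add: Ei_def zeta_zero gz_zero)

lemma Fi_deriv: "\<exists>D. (Fi i has_derivative D) (at x) \<and> D (axis i 1) = Ei i x"
proof (cases "x \<in> U")
  case True
  have dw: "(w has_derivative frechet_derivative w (at x)) (at x)" by (rule grad_deriv[OF w_diff[OF True]])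
  have dz: "(\<zeta> has_derivative frechet_derivative \<zeta> (at x)) (at x)" by (rule grad_deriv[OF zeta_diff])
  have dp: "((\<lambda>y. p y $ i) has_derivative frechet_derivative (\<lambda>y. p y $ i) (at x)) (at x)"
    by (rule grad_deriv[OF p_diff[OF True]])
  note d = has_derivative_mult[OF has_derivative_mult[OF has_derivative_mult[OF dw has_derivative_mult[OF dz dz]] th_deriv[OF True]] dp]
  show ?thesis
    apply (intro exI conjI)
     apply (rule has_derivative_transform_within_open[OF d Uopen True])
     apply (simp add: Fi_def)
    using True by (simp add: Ei_def grad_axis col_def hess_def algebra_simps)
next
  case False
  then have x: "x \<in> - S" using S_sub by auto
  have "(Fi i has_derivative (\<lambda>_. 0)) (at x)"
    by (rule zero_near_grad(1)[of "- S"]) (use S_compact compact_imp_closed x Fi_zero in auto)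
  then show ?thesis using Ei_zero x by auto
qed

lemma prod4:
  fixes x1 x2 x3 x4 A B C D :: real
  assumes "\<bar>x1\<bar> \<le> A" "\<bar>x2\<bar> \<le> B" "\<bar>x3\<bar> \<le> C" "\<bar>x4\<bar> \<le> D"
  shows "\<bar>x1 * x2 * x3 * x4\<bar> \<le> A * B * C * D"
proof -
  have "\<bar>x1 * x2 * x3 * x4\<bar> = \<bar>x1\<bar> * \<bar>x2\<bar> * \<bar>x3\<bar> * \<bar>x4\<bar>" by (simp add: abs_mult)
  also have "\<dots> \<le> A * B * C * D"
    using assms by (intro mult_mono) (auto intro: order_trans[OF abs_ge_zero])
  finally show ?thesis .
qed

lemma col_le: "norm (col x i) \<le> norm (H x)"
  unfolding col_def by (rule norm_le_componentwise_cart) (simp add: component_le_norm_cart)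

lemma Ei_bound: "\<exists>B. \<forall>x. \<bar>Ei i x\<bar> \<le> B"
proof -
  obtain Mw where Mw: "Mw \<ge> 0" "\<forall>x\<in>S. norm (w x) \<le> Mw"
    using compact_bound[OF S_compact continuous_on_subset[OF w_cont S_sub]] by blast
  obtain Mz where Mz: "Mz \<ge> 0" "\<forall>x\<in>S. norm (\<zeta> x) \<le> Mz"
    using compact_bound[OF S_compact continuous_on_subset[OF zeta_cont]] by blast
  obtain Mg where Mg: "Mg \<ge> 0" "\<forall>x\<in>S. norm (gz x) \<le> Mg"
    using compact_bound[OF S_compact continuous_on_subset[OF gzv_cont]] by blast
  obtain Mp where Mp: "Mp \<ge> 0" "\<forall>x\<in>S. norm (p x) \<le> Mp"
    using compact_bound[OF S_compact continuous_on_subset[OF p_cont S_sub]] by blast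
  obtain Mh where Mh: "Mh \<ge> 0" "\<forall>x\<in>S. norm (H x) \<le> Mh"
    using compact_bound[OF S_compact continuous_on_subset[OF Hv_cont S_sub]] by blast
  define Tm where "Tm = Mp powr (2 * s) / a 0"
  define Dm where "Dm = 2 * s * (1 / a 0) * Mp powr (2 * s - 1) * Mh"
  define B where "B = Mp * (Mz * Mz) * Tm * Mp + Mw * (2 * Mz * Mg) * Tm * Mp + Mw * (Mz * Mz) * Dm * Mp
     + Mw * (Mz * Mz) * Tm * Mh"
  have "\<bar>Ei i x\<bar> \<le> B" for x
  proof (cases "x \<in> S")
    case False then show ?thesis
      using Mw Mz Mg Mp Mh a0 s1 by (simp add: Ei_zero B_def Tm_def Dm_def)
  next
    case xS: True
    then have xU: "x \<in> U" using S_sub by auto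
    have pi: "\<bar>p x $ i\<bar> \<le> Mp" using component_le_norm_cart[of "p x" i] Mp xS by auto
    have h1: "norm (H x $ i) \<le> norm (H x)" by (rule Finite_Cartesian_Product.norm_nth_le)
    have h2: "\<bar>H x $ i $ i\<bar> \<le> norm (H x $ i)" by (rule component_le_norm_cart)
    have Hii: "\<bar>H x $ i $ i\<bar> \<le> Mh" using h1 h2 Mh xS by force
    have z1: "\<bar>\<zeta> x\<bar> \<le> Mz" using Mz xS by auto
    have zz: "\<bar>\<zeta> x * \<zeta> x\<bar> \<le> Mz * Mz" unfolding abs_mult using z1 by (intro mult_mono) auto
    have ww: "\<bar>w x\<bar> \<le> Mw" using Mw xS by auto
    have zg: "\<bar>2 * \<zeta> x * gz x $ i\<bar> \<le> 2 * Mz * Mg"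
    proof -
      have "\<bar>gz x $ i\<bar> \<le> Mg" using Mg xS component_le_norm_cart[of "gz x" i] by force
      then show ?thesis unfolding abs_mult using z1 Mz by (intro mult_mono) auto
    qed
    have rp: "norm (p x) \<le> Mp" using Mp xS by auto
    have thb: "\<bar>th x\<bar> \<le> Tm"
    proof -
      have "\<bar>th x\<bar> \<le> norm (p x) powr (2 * s) / a 0" unfolding th_def rt_def by (rule rho_bound) simp
      also have "\<dots> \<le> Tm" unfolding Tm_def using rp s1 a0
        by (intro divide_right_mono powr_mono2) auto
      finally show ?thesis .
    qed
    have Db: "\<bar>Drt (p x) (col x i)\<bar> \<le> Dm"
    proof -
      have "\<bar>Drt (p x) (col x i)\<bar> \<le> 2 * s * K (norm (p x)) * norm (p x) powr (2 * s - 1) * norm (col x i)"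
        by (rule Drt_bound)
      also have "\<dots> \<le> Dm" unfolding Dm_def
        using s1 K_le[of "norm (p x)"] K_pos[of "norm (p x)"] rp col_le[of x i] Mh xS a0
        by (intro mult_mono powr_mono2) auto
      finally show ?thesis .
    qed
    have "\<bar>Ei i x\<bar> \<le> \<bar>p x $ i * (\<zeta> x * \<zeta> x) * th x * p x $ i\<bar>
       + \<bar>w x * (2 * \<zeta> x * gz x $ i) * th x * p x $ i\<bar> + \<bar>w x * (\<zeta> x * \<zeta> x) * Drt (p x) (col x i) * p x $ i\<bar>
       + \<bar>w x * (\<zeta> x * \<zeta> x) * th x * H x $ i $ i\<bar>"
      using xU unfolding Ei_def by simp
    also have "\<dots> \<le> B" unfolding B_def
      by (intro add_mono prod4 pi zz thb ww zg Db Hii)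
    finally show ?thesis .
  qed
  then show ?thesis by blast
qed

lemma Ei_int: "integrable lborel (Ei i) \<and> integral\<^sup>L lborel (Ei i) = 0"
proof -
  obtain D where D: "\<And>x. (Fi i has_derivative D x) (at x) \<and> D x (axis i 1) = Ei i x"
    using Fi_deriv by metis
  obtain B where B: "\<And>x. \<bar>Ei i x\<bar> \<le> B" using Ei_bound by blast
  have "integrable lborel (\<lambda>x. D x (axis i 1)) \<and> integral\<^sup>L lborel (\<lambda>x. D x (axis i 1)) = 0"
    by (rule deriv_integral_zero[where f="Fi i" and D=D and S=S and e="axis i 1" and B=B])
       (use D B S_compact Fi_zero in auto)
  moreover have "(\<lambda>x. D x (axis i 1)) = Ei i" using D by auto
  ultimately show ?thesis by simp
qed

end


lemma key_real:
  fixes R wv z K P0 P2 P4 r G h c M :: real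
  assumes K: "K \<ge> 0" and M: "M \<ge> 0" "\<bar>wv\<bar> \<le> M" and r: "r \<ge> 0" and G: "G \<ge> 0" and h: "h \<ge> 0"
    and c: "c \<ge> 0" and P: "P0 \<ge> 0" "P2 \<ge> 0" "P4 \<ge> 0"
    and P2z: "r = 0 \<Longrightarrow> P2 = 0"
    and Pt: "r > 0 \<Longrightarrow> \<exists>t. P0 = t\<^sup>2 \<and> P2 = t\<^sup>2 * r\<^sup>2 \<and> P4 = t\<^sup>2 * r\<^sup>2 * r\<^sup>2"
    and R: "\<bar>R\<bar> \<le> 2 * \<bar>wv\<bar> * \<bar>z\<bar> * (K * P2) * G * r + \<bar>wv\<bar> * z\<^sup>2 * c * (K * P2) * h"
  shows "\<bar>R\<bar> \<le> K * P4 * z\<^sup>2 / 2 + M\<^sup>2 * (c\<^sup>2 * (K * P0 * h\<^sup>2 * z\<^sup>2) + 4 * (K * P2 * G\<^sup>2))"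
proof -
  have rhs: "0 \<le> K * P4 * z\<^sup>2 / 2 + M\<^sup>2 * (c\<^sup>2 * (K * P0 * h\<^sup>2 * z\<^sup>2) + 4 * (K * P2 * G\<^sup>2))"
    using K P by (intro add_nonneg_nonneg mult_nonneg_nonneg) auto
  have R2: "\<bar>R\<bar> \<le> 2 * M * \<bar>z\<bar> * (K * P2) * r * G + M * z\<^sup>2 * c * (K * P2) * h"
  proof -
    have "2 * \<bar>wv\<bar> * \<bar>z\<bar> * (K * P2) * G * r \<le> 2 * M * \<bar>z\<bar> * (K * P2) * G * r"
      using M K P G r by (intro mult_right_mono) auto
    moreover have "\<bar>wv\<bar> * z\<^sup>2 * c * (K * P2) * h \<le> M * z\<^sup>2 * c * (K * P2) * h"
      using M K P h c by (intro mult_right_mono) auto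
    ultimately show ?thesis using R by (simp add: algebra_simps)
  qed
  show ?thesis
  proof (cases "r = 0")
    case True
    then show ?thesis using R2 P2z rhs by simp
  next
    case False
    then obtain t where t: "P0 = t\<^sup>2" "P2 = t\<^sup>2 * r\<^sup>2" "P4 = t\<^sup>2 * r\<^sup>2 * r\<^sup>2" using Pt r by auto
    have y1: "2 * M * \<bar>z\<bar> * (K * t\<^sup>2 * r\<^sup>2) * r * G \<le> (K * t\<^sup>2 * r\<^sup>2 * r\<^sup>2) * z\<^sup>2 / 4 + 4 * M\<^sup>2 * (K * t\<^sup>2 * r\<^sup>2) * G\<^sup>2"
      by (rule young1) (use K M in auto)
    have y2: "M * z\<^sup>2 * c * (K * t\<^sup>2 * r\<^sup>2) * h \<le> (K * t\<^sup>2 * r\<^sup>2 * r\<^sup>2) * z\<^sup>2 / 4 + M\<^sup>2 * c\<^sup>2 * (K * t\<^sup>2) * h\<^sup>2 * z\<^sup>2"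
      by (rule young2) (use K M in auto)
    have "\<bar>R\<bar> \<le> (K * t\<^sup>2 * r\<^sup>2 * r\<^sup>2) * z\<^sup>2 / 4 + 4 * M\<^sup>2 * (K * t\<^sup>2 * r\<^sup>2) * G\<^sup>2
        + ((K * t\<^sup>2 * r\<^sup>2 * r\<^sup>2) * z\<^sup>2 / 4 + M\<^sup>2 * c\<^sup>2 * (K * t\<^sup>2) * h\<^sup>2 * z\<^sup>2)"
      using R2 y1 y2 unfolding t by (simp only: ac_simps)
    also have "\<dots> = K * P4 * z\<^sup>2 / 2 + M\<^sup>2 * (c\<^sup>2 * (K * P0 * h\<^sup>2 * z\<^sup>2) + 4 * (K * P2 * G\<^sup>2))"
      unfolding t by (simp add: algebra_simps)
    finally show ?thesis .
  qed
qed

context mset begin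

definition "Qf x = K (norm (p x)) * pw (norm (p x)) (2 * s+2) * (\<zeta> x)\<^sup>2"
definition "Af x = K (norm (p x)) * pw (norm (p x)) (2 * s-2) * (norm (H x))\<^sup>2 * (\<zeta> x)\<^sup>2"
definition "Bf x = K (norm (p x)) * pw (norm (p x)) (2 * s) * (norm (gz x))\<^sup>2"

lemma th_eq: "th x = K (norm (p x)) * pw (norm (p x)) (2 * s)"
  unfolding th_def rt_def by (rule rho_eq) simp

lemma T3_bound: "\<bar>Drt (p x) (col x i) * p x $ i\<bar> \<le> 2 * s * K (norm (p x)) * pw (norm (p x)) (2 * s) * norm (H x)"
proof (cases "p x = 0")
  case True then show ?thesis using s1 K_pos[of 0] by (simp add: pw_def)
next
  case False
  let ?r = "norm (p x)"
  have r: "?r > 0" using False by simp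
  have "\<bar>Drt (p x) (col x i) * p x $ i\<bar> \<le> (2 * s * K ?r * ?r powr (2 * s - 1) * norm (col x i)) * ?r"
    unfolding abs_mult using Drt_bound component_le_norm_cart s1 K_pos[of ?r]
    by (intro mult_mono) auto
  also have "\<dots> \<le> (2 * s * K ?r * ?r powr (2 * s - 1) * norm (H x)) * ?r"
    using col_le s1 K_pos[of ?r] by (intro mult_right_mono mult_left_mono) auto
  also have "\<dots> = 2 * s * K ?r * (?r powr (2 * s - 1) * ?r) * norm (H x)" by (simp add: algebra_simps)
  also have "?r powr (2 * s - 1) * ?r = pw ?r (2 * s)"
    using r s1 by (simp add: pw_def powr_mult_base mult.commute)
  finally show ?thesis .
qed

lemma pw_split: assumes "r > 0"
  shows "\<exists>t. pw r (2 * s - 2) = t\<^sup>2 \<and> pw r (2 * s) = t\<^sup>2 * r\<^sup>2 \<and> pw r (2 * s + 2) = t\<^sup>2 * r\<^sup>2 * r\<^sup>2"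
proof (intro exI conjI)
  let ?t = "r powr (s - 1)"
  have e: "?t\<^sup>2 = r powr (2 * s - 2)" using assms by (simp add: power2_eq_square powr_add[symmetric])
  have e2: "r powr 2 = r\<^sup>2" using assms by (simp add: powr_numeral)
  have a1: "r powr (2 * s) = r powr (2 * s - 2) * r powr 2" by (simp add: powr_add[symmetric])
  have a2: "r powr (2 * s + 2) = r powr (2 * s - 2) * r powr 2 * r powr 2" by (simp add: powr_add[symmetric])
  show "pw r (2 * s - 2) = ?t\<^sup>2" using e assms by (simp add: pw_def)
  show "pw r (2 * s) = ?t\<^sup>2 * r\<^sup>2" using s1 by (simp add: pw_def a1 e e2)
  show "pw r (2 * s + 2) = ?t\<^sup>2 * r\<^sup>2 * r\<^sup>2" using s1 by (simp add: pw_def a2 e e2)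
qed

lemma pointwise:
  assumes xU: "x \<in> U" and M: "M \<ge> 0" "x \<in> S \<Longrightarrow> \<bar>w x\<bar> \<le> M"
  shows "\<bar>(\<Sum>i\<in>UNIV. Ei i x) - Qf x\<bar> \<le> Qf x / 2 + M\<^sup>2 * ((real CARD('n) * (2 * s + 1))\<^sup>2 * Af x + 4 * Bf x)"
proof (cases "x \<in> S")
  case False
  then show ?thesis by (simp add: Ei_zero Qf_def Af_def Bf_def zeta_zero gz_zero)
next
  case xS: True
  let ?r = "norm (p x)"
  let ?Kr = "K ?r"
  let ?P2 = "pw ?r (2 * s)"
  define T2 where "T2 = (\<Sum>i\<in>UNIV. w x * (2 * \<zeta> x * gz x $ i) * th x * p x $ i)"
  define T3 where "T3 = (\<Sum>i\<in>UNIV. w x * (\<zeta> x * \<zeta> x) * Drt (p x) (col x i) * p x $ i)"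
  define T4 where "T4 = (\<Sum>i\<in>UNIV. w x * (\<zeta> x * \<zeta> x) * th x * H x $ i $ i)"
  have T1: "(\<Sum>i\<in>UNIV. p x $ i * (\<zeta> x * \<zeta> x) * th x * p x $ i) = Qf x"
  proof -
    have "(\<Sum>i\<in>UNIV. p x $ i * (\<zeta> x * \<zeta> x) * th x * p x $ i) = (\<zeta> x * \<zeta> x) * (th x * (\<Sum>i\<in>UNIV. p x $ i * p x $ i))"
      by (simp add: sum_distrib_left algebra_simps)
    also have "(\<Sum>i\<in>UNIV. p x $ i * p x $ i) = ?r\<^sup>2"
      by (simp add: power2_norm_eq_inner inner_vec_def)
    also have "th x * ?r\<^sup>2 = ?Kr * pw ?r (2 * s + 2)"
      unfolding th_def rt_def by (rule rho_sq) simp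
    finally show ?thesis by (simp add: Qf_def power2_eq_square algebra_simps)
  qed
  have sumE: "(\<Sum>i\<in>UNIV. Ei i x) = Qf x + T2 + T3 + T4"
    using xU by (simp add: Ei_def sum.distrib T1[symmetric] T2_def T3_def T4_def)
  have thn: "th x = ?Kr * ?P2" by (rule th_eq)
  have Kr: "?Kr \<ge> 0" using K_pos[of ?r] by simp
  have P2: "?P2 \<ge> 0" by (simp add: pw_def)
  have bT2: "\<bar>T2\<bar> \<le> 2 * \<bar>w x\<bar> * \<bar>\<zeta> x\<bar> * (?Kr * ?P2) * norm (gz x) * ?r"
  proof -
    have "T2 = 2 * w x * \<zeta> x * th x * inner (gz x) (p x)"
      by (simp add: T2_def inner_vec_def sum_distrib_left algebra_simps)
    then have "\<bar>T2\<bar> = 2 * \<bar>w x\<bar> * \<bar>\<zeta> x\<bar> * (?Kr * ?P2) * \<bar>inner (gz x) (p x)\<bar>"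
      using Kr P2 thn by (simp add: abs_mult)
    also have "\<dots> \<le> 2 * \<bar>w x\<bar> * \<bar>\<zeta> x\<bar> * (?Kr * ?P2) * (norm (gz x) * ?r)"
      using Kr P2 by (intro mult_left_mono Cauchy_Schwarz_ineq2) auto
    finally show ?thesis by (simp add: algebra_simps)
  qed
  have bT3: "\<bar>T3\<bar> \<le> \<bar>w x\<bar> * (\<zeta> x)\<^sup>2 * (real CARD('n) * (2 * s * ?Kr * ?P2 * norm (H x)))"
  proof -
    have "T3 = w x * (\<zeta> x * \<zeta> x) * (\<Sum>i\<in>UNIV. Drt (p x) (col x i) * p x $ i)"
      by (simp add: T3_def sum_distrib_left algebra_simps)
    moreover have "\<bar>\<Sum>i\<in>UNIV. Drt (p x) (col x i) * p x $ i\<bar> \<le> real CARD('n) * (2 * s * ?Kr * ?P2 * norm (H x))"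
    proof -
      have "\<bar>\<Sum>i\<in>UNIV. Drt (p x) (col x i) * p x $ i\<bar> \<le> (\<Sum>i\<in>(UNIV::'n set). 2 * s * ?Kr * ?P2 * norm (H x))"
        by (rule order_trans[OF sum_abs sum_mono]) (rule T3_bound)
      then show ?thesis by simp
    qed
    ultimately show ?thesis
      by (simp add: abs_mult power2_eq_square mult_left_mono)
  qed
  have bT4: "\<bar>T4\<bar> \<le> \<bar>w x\<bar> * (\<zeta> x)\<^sup>2 * (?Kr * ?P2) * (real CARD('n) * norm (H x))"
  proof -
    have "T4 = w x * (\<zeta> x * \<zeta> x) * th x * (\<Sum>i\<in>UNIV. H x $ i $ i)"
      by (simp add: T4_def sum_distrib_left algebra_simps)
    moreover have "\<bar>\<Sum>i\<in>UNIV. H x $ i $ i\<bar> \<le> real CARD('n) * norm (H x)"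
    proof -
      have "\<bar>H x $ i $ i\<bar> \<le> norm (H x)" for i
        using component_le_norm_cart[of "H x $ i" i] Finite_Cartesian_Product.norm_nth_le[of "H x" i]
        by linarith
      then have "\<bar>\<Sum>i\<in>UNIV. H x $ i $ i\<bar> \<le> (\<Sum>i\<in>(UNIV::'n set). norm (H x))"
        by (intro order_trans[OF sum_abs sum_mono])
      then show ?thesis by simp
    qed
    ultimately show ?thesis using thn Kr P2
      by (simp add: abs_mult power2_eq_square mult_left_mono)
  qed
  have R: "\<bar>T2 + T3 + T4\<bar> \<le> 2 * \<bar>w x\<bar> * \<bar>\<zeta> x\<bar> * (?Kr * ?P2) * norm (gz x) * ?r
      + \<bar>w x\<bar> * (\<zeta> x)\<^sup>2 * (real CARD('n) * (2 * s + 1)) * (?Kr * ?P2) * norm (H x)"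
  proof -
    have "\<bar>w x\<bar> * (\<zeta> x)\<^sup>2 * (real CARD('n) * (2 * s * ?Kr * ?P2 * norm (H x)))
        + \<bar>w x\<bar> * (\<zeta> x)\<^sup>2 * (?Kr * ?P2) * (real CARD('n) * norm (H x))
        = \<bar>w x\<bar> * (\<zeta> x)\<^sup>2 * (real CARD('n) * (2 * s + 1)) * (?Kr * ?P2) * norm (H x)"
      by (simp add: algebra_simps)
    then show ?thesis using bT2 bT3 bT4 by linarith
  qed
  have "\<bar>T2 + T3 + T4\<bar> \<le> ?Kr * pw ?r (2 * s + 2) * (\<zeta> x)\<^sup>2 / 2
      + M\<^sup>2 * ((real CARD('n) * (2 * s + 1))\<^sup>2 * (?Kr * pw ?r (2 * s - 2) * (norm (H x))\<^sup>2 * (\<zeta> x)\<^sup>2) + 4 * (?Kr * ?P2 * (norm (gz x))\<^sup>2))"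
  proof (rule key_real[OF Kr M(1) M(2)[OF xS] norm_ge_zero norm_ge_zero norm_ge_zero _ _ _ _ _ _ R])
    show "0 \<le> real CARD('n) * (2 * s + 1)" using s1 by simp
    show "0 \<le> pw ?r (2 * s - 2)" "0 \<le> ?P2" "0 \<le> pw ?r (2 * s + 2)" by (simp_all add: pw_def)
    show "?r = 0 \<Longrightarrow> ?P2 = 0" using s1 by (simp add: pw_def)
    show "?r > 0 \<Longrightarrow> \<exists>t. pw ?r (2 * s - 2) = t\<^sup>2 \<and> ?P2 = t\<^sup>2 * ?r\<^sup>2 \<and> pw ?r (2 * s + 2) = t\<^sup>2 * ?r\<^sup>2 * ?r\<^sup>2"
      by (rule pw_split)
  qed
  then show ?thesis unfolding sumE by (simp add: Qf_def Af_def Bf_def mult.assoc)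
qed

end


context mset begin

lemma Kn_cont: "continuous_on U (\<lambda>x. K (norm (p x)))"
  by (rule continuous_on_compose2[OF K_cont continuous_on_norm[OF p_cont]]) auto

lemma pwn_cont: "e \<ge> 0 \<Longrightarrow> continuous_on U (\<lambda>x. pw (norm (p x)) e)"
  by (rule continuous_on_compose2[OF pw_cont continuous_on_norm[OF p_cont]]) auto

lemma Qf_cont: "continuous_on U Qf"
  unfolding Qf_def using s1
  by (intro continuous_intros Kn_cont pwn_cont continuous_on_subset[OF zeta_cont]) auto

lemma Af_cont: "continuous_on U Af"
  unfolding Af_def using s1
  by (intro continuous_intros Kn_cont pwn_cont continuous_on_subset[OF zeta_cont] Hv_cont) auto

lemma Bf_cont: "continuous_on U Bf"
  unfolding Bf_def using s1
  by (intro continuous_intros Kn_cont pwn_cont continuous_on_subset[OF gzv_cont]) auto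

lemma QAB_zero: "x \<notin> S \<Longrightarrow> Qf x = 0 \<and> Af x = 0 \<and> Bf x = 0"
  by (simp add: Qf_def Af_def Bf_def zeta_zero gz_zero)

lemma QAB_nonneg: "Qf x \<ge> 0 \<and> Af x \<ge> 0 \<and> Bf x \<ge> 0"
  using K_pos[of "norm (p x)"] by (simp add: Qf_def Af_def Bf_def pw_def)

lemma main_ineq:
  "(LINT x:U|lebesgue. Qf x) \<le> (2 * (real CARD('n) * (2 * s + 1))\<^sup>2 + 8) * Sup ((\<lambda>x. \<bar>w x\<bar>\<^sup>2) ` S)
     * ((LINT x:U|lebesgue. Af x) + (LINT x:U|lebesgue. Bf x))"
proof -
  define c where "c = real CARD('n) * (2 * s + 1)"
  define Sm where "Sm = Sup ((\<lambda>x. \<bar>w x\<bar>\<^sup>2) ` S)"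
  note mQ = masked_integrable[OF Uopen S_compact S_sub Qf_cont]
  note mA = masked_integrable[OF Uopen S_compact S_sub Af_cont]
  note mB = masked_integrable[OF Uopen S_compact S_sub Bf_cont]
  have iQ: "integrable lborel (\<lambda>x. indicator U x * Qf x)" "(\<lambda>x. indicator U x * Qf x) \<in> borel_measurable borel"
    using mQ QAB_zero by auto
  have iA: "integrable lborel (\<lambda>x. indicator U x * Af x)" "(\<lambda>x. indicator U x * Af x) \<in> borel_measurable borel"
    using mA QAB_zero by auto
  have iB: "integrable lborel (\<lambda>x. indicator U x * Bf x)" "(\<lambda>x. indicator U x * Bf x) \<in> borel_measurable borel"
    using mB QAB_zero by auto
  define IQ where "IQ = integral\<^sup>L lborel (\<lambda>x. indicator U x * Qf x)"
  define IA where "IA = integral\<^sup>L lborel (\<lambda>x. indicator U x * Af x)"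
  define IB where "IB = integral\<^sup>L lborel (\<lambda>x. indicator U x * Bf x)"
  have LQ: "(LINT x:U|lebesgue. Qf x) = IQ" unfolding IQ_def by (rule set_lint_lborel[OF iQ(2)])
  have LA: "(LINT x:U|lebesgue. Af x) = IA" unfolding IA_def by (rule set_lint_lborel[OF iA(2)])
  have LB: "(LINT x:U|lebesgue. Bf x) = IB" unfolding IB_def by (rule set_lint_lborel[OF iB(2)])
  have IA0: "IA \<ge> 0" unfolding IA_def
    by (rule Bochner_Integration.integral_nonneg) (use QAB_nonneg in \<open>auto simp: indicator_def\<close>)
  have IB0: "IB \<ge> 0" unfolding IB_def
    by (rule Bochner_Integration.integral_nonneg) (use QAB_nonneg in \<open>auto simp: indicator_def\<close>)
  show ?thesis
  proof (cases "S = {}")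
    case True
    have z1: "(\<lambda>x. indicator U x * Qf x) = (\<lambda>_. 0)" using QAB_zero True by auto
    have z2: "(\<lambda>x. indicator U x * Af x) = (\<lambda>_. 0)" using QAB_zero True by auto
    have z3: "(\<lambda>x. indicator U x * Bf x) = (\<lambda>_. 0)" using QAB_zero True by auto
    have "IQ = 0" "IA = 0" "IB = 0" unfolding IQ_def IA_def IB_def z1 z2 z3 by simp_all
    then show ?thesis using LQ LA LB by simp
  next
    case False
    have bdd: "bdd_above ((\<lambda>x. \<bar>w x\<bar>\<^sup>2) ` S)"
    proof -
      have "continuous_on S (\<lambda>x. \<bar>w x\<bar>\<^sup>2)"
        by (intro continuous_intros continuous_on_subset[OF w_cont S_sub])
      then have "compact ((\<lambda>x. \<bar>w x\<bar>\<^sup>2) ` S)" using S_compact compact_continuous_image by blast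
      then show ?thesis by (intro bounded_imp_bdd_above compact_imp_bounded)
    qed
    have wS: "x \<in> S \<Longrightarrow> \<bar>w x\<bar>\<^sup>2 \<le> Sm" for x unfolding Sm_def using bdd by (intro cSup_upper) auto
    have Sm0: "Sm \<ge> 0" using False wS by (meson ex_in_conv order_trans zero_le_power2)
    define M where "M = sqrt Sm"
    have M: "M \<ge> 0" "M\<^sup>2 = Sm" using Sm0 by (auto simp: M_def)
    have wM: "x \<in> S \<Longrightarrow> \<bar>w x\<bar> \<le> M" for x
      unfolding M_def using wS[of x] by (simp add: real_le_rsqrt)
    define E where "E x = (\<Sum>i\<in>UNIV. Ei i x)" for x
    have iE: "integrable lborel E" unfolding E_def by (rule Bochner_Integration.integrable_sum) (use Ei_int in auto)
    have IE: "integral\<^sup>L lborel E = 0" unfolding E_def by (subst Bochner_Integration.integral_sum) (use Ei_int in auto)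
    define g where "g x = indicator U x * Qf x / 2 + Sm * (c\<^sup>2 * (indicator U x * Af x) + 4 * (indicator U x * Bf x))" for x
    have ig: "integrable lborel g" unfolding g_def using iQ iA iB by auto
    have Ig: "integral\<^sup>L lborel g = IQ / 2 + Sm * (c\<^sup>2 * IA + 4 * IB)"
      unfolding g_def IQ_def IA_def IB_def using iQ iA iB by simp
    have pt: "\<bar>E x - indicator U x * Qf x\<bar> \<le> g x" for x
    proof (cases "x \<in> U")
      case True
      then show ?thesis using pointwise[OF True M(1) wM] M(2) by (simp add: E_def g_def c_def)
    next
      case False
      then show ?thesis by (simp add: E_def g_def Ei_def)
    qed
    have "IQ = integral\<^sup>L lborel (\<lambda>x. indicator U x * Qf x - E x)"
      unfolding IQ_def using iQ iE IE by simp
    also have "\<dots> \<le> integral\<^sup>L lborel g"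
      using iQ iE ig pt by (intro integral_mono) (auto simp: abs_le_iff)
    finally have "IQ \<le> IQ / 2 + Sm * (c\<^sup>2 * IA + 4 * IB)" using Ig by simp
    then have "IQ \<le> 2 * c\<^sup>2 * Sm * IA + 8 * Sm * IB" by (simp add: algebra_simps)
    also have "\<dots> \<le> (2 * c\<^sup>2 + 8) * Sm * (IA + IB)"
    proof -
      have "0 \<le> 8 * Sm * IA + 2 * c\<^sup>2 * Sm * IB" using Sm0 IA0 IB0 by simp
      then show ?thesis by (simp add: algebra_simps)
    qed
    finally show ?thesis using LQ LA LB by (simp add: c_def Sm_def)
  qed
qed

end


theorem lemma3p8:
  fixes U :: "(real^'n) set" and N :: nat and a \<alpha> :: "nat \<Rightarrow> real" and s :: real
  assumes "CARD('n) \<ge> 2" and "bounded U" and "open U"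
    and "N \<ge> 1" and "\<alpha> 0 = 0" and "\<forall>j<N. \<alpha> j < \<alpha> (Suc j)"
    and "a 0 > 0" and "a N > 0" and "\<forall>j\<le>N. a j \<ge> 0"
    and "s \<ge> 1"
  shows "\<exists>C>0. \<forall>\<zeta> w. test_fun U \<zeta> \<and> Ck_on 2 U w \<longrightarrow>
     (LINT x:U|lebesgue. Kfun N a \<alpha> (norm (grad w x)) * pw (norm (grad w x)) (2 * s+2) * (\<zeta> x)\<^sup>2)
     \<le> C * Sup ((\<lambda>x. \<bar>w x\<bar>\<^sup>2) ` supp \<zeta>) *
       ((LINT x:U|lebesgue. Kfun N a \<alpha> (norm (grad w x)) * pw (norm (grad w x)) (2 * s-2)
            * (norm (hess w x))\<^sup>2 * (\<zeta> x)\<^sup>2)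
      + (LINT x:U|lebesgue. Kfun N a \<alpha> (norm (grad w x)) * pw (norm (grad w x)) (2 * s)
            * (norm (grad \<zeta> x))\<^sup>2))"
proof -
  interpret gs N a \<alpha> s by unfold_locales (use assms in auto)
  show ?thesis
  proof (intro exI[of _ "2 * (real CARD('n) * (2 * s + 1))\<^sup>2 + 8"] conjI allI impI)
    show "0 < 2 * (real CARD('n) * (2 * s + 1))\<^sup>2 + 8"
      by (intro add_nonneg_pos) auto
    fix \<zeta> w assume h: "test_fun U \<zeta> \<and> Ck_on 2 U w"
    interpret mset N a \<alpha> s U \<zeta> w by unfold_locales (use assms h in auto)
    show "(LINT x:U|lebesgue. Kfun N a \<alpha> (norm (grad w x)) * pw (norm (grad w x)) (2 * s+2) * (\<zeta> x)\<^sup>2)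
     \<le> (2 * (real CARD('n) * (2 * s + 1))\<^sup>2 + 8) * Sup ((\<lambda>x. \<bar>w x\<bar>\<^sup>2) ` supp \<zeta>) *
       ((LINT x:U|lebesgue. Kfun N a \<alpha> (norm (grad w x)) * pw (norm (grad w x)) (2 * s-2)
            * (norm (hess w x))\<^sup>2 * (\<zeta> x)\<^sup>2)
      + (LINT x:U|lebesgue. Kfun N a \<alpha> (norm (grad w x)) * pw (norm (grad w x)) (2 * s)
            * (norm (grad \<zeta> x))\<^sup>2))"
      using main_ineq unfolding Qf_def Af_def Bf_def .
  qed
qed

end
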